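(* Let $S$ be the shearlet group. There exists a nonzero function $F\in L^2(S)$ that has linearly dependent left translations, i.e. there are distinct $g_1,\dots,g_m\in S$ and nonzero $c_1,\dots,c_m\in\mathbb{C}$ with $\sum_k c_k L(g_k)F=0$.
   Context: For $a>0$ and $s\in\mathbb{R}$ let $A_a=\begin{pmatrix} a&0\\0&\sqrt a\end{pmatrix}$ and $S_s=\begin{pmatrix}1&s\\0&1\end{pmatrix}$, and let $\mathcal{G}=\{S_sA_a: a>0, s\in\mathbb{R}\}$. The shearlet group is $S=\mathcal{G}\ltimes\mathbb{R}^2$ with multiplication $(M,t)(M',t')=(MM',t+Mt')$ ($t\in\mathbb{R}^2$ a column vector). Its left Haar measure is $\frac{da\,ds\,dt}{a^3}$, with respect to which $L^2(S)$ is taken; $L(g)F(x)=F(g^{-1}x)$. *)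

theory Defs
  imports "HOL-Analysis.Analysis"
begin

definition A_mat :: "real \<Rightarrow> real^2^2" where
  "A_mat a = vector [vector [a, 0], vector [0, sqrt a]]"

definition S_mat :: "real \<Rightarrow> real^2^2" where
  "S_mat s = vector [vector [1, s], vector [0, 1]]"

type_synonym shearlet = "(real^2^2) \<times> (real^2)"

definition shearlet_group :: "shearlet set" where
  "shearlet_group = {(S_mat s ** A_mat a, t) | a s t. a > 0}"

definition sh_mult :: "shearlet \<Rightarrow> shearlet \<Rightarrow> shearlet" where
  "sh_mult g h = (fst g ** fst h, snd g + fst g *v snd h)"

definition sh_inv :: "shearlet \<Rightarrow> shearlet" where
  "sh_inv g = (matrix_inv (fst g), - (matrix_inv (fst g) *v snd g))"

definition sh_param :: "real \<times> real \<times> (real^2) \<Rightarrow> shearlet" where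
  "sh_param p = (case p of (a, s, t) \<Rightarrow> (S_mat s ** A_mat a, t))"

definition shearlet_haar :: "shearlet measure" where
  "shearlet_haar = distr
     (density lborel (\<lambda>(a, s, t). indicator {0<..} a * ennreal (1 / a ^ 3)))
     borel sh_param"

definition left_transl :: "shearlet \<Rightarrow> (shearlet \<Rightarrow> complex) \<Rightarrow> shearlet \<Rightarrow> complex" where
  "left_transl g F x = F (sh_mult (sh_inv g) x)"

definition in_L2_shearlet :: "(shearlet \<Rightarrow> complex) \<Rightarrow> bool" where
  "in_L2_shearlet F \<longleftrightarrow> F \<in> borel_measurable shearlet_haar
     \<and> integrable shearlet_haar (\<lambda>x. (norm (F x))\<^sup>2)"

end

theory Submission
  imports Defs
begin


lemma matrix_inv_eq:
  fixes A B :: "real^2^2"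
  assumes "A ** B = mat 1" "B ** A = mat 1"
  shows "matrix_inv A = B"
proof -
  have ex: "\<exists>A'. A ** A' = mat 1 \<and> A' ** A = mat 1" using assms by blast
  define C where "C = matrix_inv A"
  have C: "A ** C = mat 1 \<and> C ** A = mat 1"
    unfolding C_def matrix_inv_def by (rule someI_ex[OF ex])
  have "C = C ** (A ** B)" using assms by (simp add: matrix_mul_rid)
  also have "\<dots> = (C ** A) ** B" by (simp add: matrix_mul_assoc)
  also have "\<dots> = B" using C by (simp add: matrix_mul_lid)
  finally show ?thesis unfolding C_def .
qed

definition D :: "real \<Rightarrow> real \<Rightarrow> real^2^2" where
  "D x y = vector [vector [x, 0], vector [0, y]]"

lemma mat_eq_iff2: "(A::real^2^2) = B \<longleftrightarrow> A$1$1 = B$1$1 \<and> A$1$2 = B$1$2 \<and> A$2$1 = B$2$1 \<and> A$2$2 = B$2$2"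
  by (auto simp: vec_eq_iff forall_2)

lemma mult_entries:
  fixes A B :: "real^2^2"
  shows "(A ** B)$i$j = A$i$1 * B$1$j + A$i$2 * B$2$j"
  by (simp add: matrix_matrix_mult_def sum_2)

lemma mv_entries:
  fixes A :: "real^2^2"
  shows "(A *v x)$i = A$i$1 * x$1 + A$i$2 * x$2"
  by (simp add: matrix_vector_mult_def sum_2)

lemma SA_entries:
  "(S_mat s ** A_mat a)$1$1 = a" "(S_mat s ** A_mat a)$1$2 = s * sqrt a"
  "(S_mat s ** A_mat a)$2$1 = 0" "(S_mat s ** A_mat a)$2$2 = sqrt a"
  by (simp_all add: mult_entries S_mat_def A_mat_def)

lemma D_entries: "(D x y)$1$1 = x" "(D x y)$1$2 = 0" "(D x y)$2$1 = 0" "(D x y)$2$2 = y"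
  by (simp_all add: D_def)

lemma mat1_entries: "(mat 1 :: real^2^2)$1$1 = 1" "(mat 1 :: real^2^2)$1$2 = 0"
   "(mat 1 :: real^2^2)$2$1 = 0" "(mat 1 :: real^2^2)$2$2 = 1"
  by (simp_all add: mat_def)

lemma SA0: "b > 0 \<Longrightarrow> S_mat 0 ** A_mat b = D b (sqrt b)"
  by (simp add: mat_eq_iff2 SA_entries D_entries)

lemma D_inv: "x \<noteq> 0 \<Longrightarrow> y \<noteq> 0 \<Longrightarrow> matrix_inv (D x y) = D (1/x) (1/y)"
  by (rule matrix_inv_eq) (simp_all add: mat_eq_iff2 mult_entries D_entries mat1_entries)



definition Phi :: "real \<Rightarrow> real \<Rightarrow> real \<Rightarrow> real \<Rightarrow> real \<Rightarrow> real" where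
  "Phi a m d t1 t2 = (if 0 \<le> m \<and> m \<le> a \<and> 0 \<le> t2 \<and> t2 \<le> d then
      a powr (1/4) * (indicator {1-a<..1} t1 - indicator {-a<..0} t1) else 0)"

lemma four_powr: "(4::real) powr (1/4) = sqrt 2"
proof -
  have "((2::real) powr 2) powr (1/4) = 2 powr (1/2)" by (simp only: powr_powr) simp
  moreover have "(2::real) powr 2 = 4" by simp
  ultimately show ?thesis by (simp add: powr_half_sqrt)
qed

lemma tele:
  fixes a t :: real
  shows "(\<Sum>k<4. indicator {1-4*a<..1} (4*t - real k) - indicator {-4*a<..0} (4*t - real k) :: real)
     = indicator {1-a<..1} t - indicator {-a<..0} t"
  by (simp add: numeral_eq_Suc indicator_def)

lemma Phi_rel:
  "(\<Sum>k<4. Phi (4*a) (4*m) (2*d) (4*t1 - real k) (2*t2)) = sqrt 2 * Phi a m d t1 t2"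
proof (cases "0 \<le> m \<and> m \<le> a \<and> 0 \<le> t2 \<and> t2 \<le> d")
  case True
  then have a: "a \<ge> 0" by auto
  have "(\<Sum>k<4. Phi (4*a) (4*m) (2*d) (4*t1 - real k) (2*t2))
     = (\<Sum>k<4. (4*a) powr (1/4) * (indicator {1-4*a<..1} (4*t1 - real k) - indicator {-4*a<..0} (4*t1 - real k)))"
    using True by (intro sum.cong) (auto simp: Phi_def)
  also have "\<dots> = (4*a) powr (1/4) * (indicator {1-a<..1} t1 - indicator {-a<..0} t1)"
    unfolding sum_distrib_left[symmetric] tele ..
  also have "\<dots> = sqrt 2 * Phi a m d t1 t2"
    using True a by (simp add: Phi_def powr_mult four_powr)
  finally show ?thesis .
next
  case False
  then show ?thesis by (auto simp: Phi_def)
qed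



definition FF :: "shearlet \<Rightarrow> complex" where
  "FF x = complex_of_real (Phi (fst x$1$1) (fst x$1$2) (fst x$2$2) (snd x$1) (snd x$2))"

definition gg :: "nat \<Rightarrow> shearlet" where
  "gg k = (if k < 4 then (S_mat 0 ** A_mat (1/4), vector [real k / 4, 0]) else (S_mat 0 ** A_mat 1, 0))"

definition cc :: "nat \<Rightarrow> complex" where
  "cc k = (if k < 4 then 1 else - complex_of_real (sqrt 2))"

lemma sqrt_quarter: "sqrt (1/4 :: real) = 1/2"
  by (simp add: real_sqrt_divide)

lemma gg_small: "k < 4 \<Longrightarrow> gg k = (D (1/4) (1/2), vector [real k / 4, 0])"
  by (simp add: gg_def SA0 sqrt_quarter)

lemma gg_4: "gg 4 = (D 1 1, 0)"
  by (simp add: gg_def SA0)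

lemma transl_small:
  assumes "k < 4"
  shows "left_transl (gg k) FF x =
     complex_of_real (Phi (4 * fst x$1$1) (4 * fst x$1$2) (2 * fst x$2$2) (4 * snd x$1 - real k) (2 * snd x$2))"
  using assms
  by (simp add: left_transl_def gg_small sh_inv_def sh_mult_def D_inv FF_def mult_entries mv_entries D_entries
      algebra_simps)

lemma transl_4: "left_transl (gg 4) FF x = FF x"
  by (simp add: left_transl_def gg_4 sh_inv_def sh_mult_def D_inv FF_def mult_entries mv_entries D_entries)

lemma dependence: "(\<Sum>k<5. cc k * left_transl (gg k) FF x) = 0"
proof -
  have "(\<Sum>k<5. cc k * left_transl (gg k) FF x) = (\<Sum>k<4. cc k * left_transl (gg k) FF x) + cc 4 * left_transl (gg 4) FF x"
    by (simp add: numeral_eq_Suc)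
  also have "(\<Sum>k<4. cc k * left_transl (gg k) FF x) = (\<Sum>k<4.
     complex_of_real (Phi (4 * fst x$1$1) (4 * fst x$1$2) (2 * fst x$2$2) (4 * snd x$1 - real k) (2 * snd x$2)))"
    by (intro sum.cong) (auto simp: cc_def transl_small)
  also have "\<dots> = complex_of_real (sqrt 2) * FF x"
    unfolding of_real_sum[symmetric] Phi_rel FF_def by simp
  finally show ?thesis by (simp add: transl_4 cc_def)
qed

lemma gg_in: "gg k \<in> shearlet_group"
  unfolding gg_def shearlet_group_def by auto

lemma gg_inj: "inj_on gg {..<5}"
proof
  fix i j assume i: "i \<in> {..<5}" and j: "j \<in> {..<5}" and e: "gg i = gg j"
  show "i = j"
  proof (cases "i < 4")
    case True
    note iT = True
    show ?thesis
    proof (cases "j < 4")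
      case True
      from arg_cong[OF e, of "\<lambda>p. snd p $ 1"] iT True show ?thesis by (simp add: gg_small)
    next
      case False
      then have "j = 4" using j by auto
      from arg_cong[OF e, of "\<lambda>p. fst p $ 1 $ 1"] iT show ?thesis by (simp add: gg_small gg_4 \<open>j = 4\<close> D_entries)
    qed
  next
    case False
    then have "i = 4" using i by auto
    show ?thesis
    proof (cases "j < 4")
      case True
      from arg_cong[OF e, of "\<lambda>p. fst p $ 1 $ 1"] True show ?thesis by (simp add: gg_small gg_4 \<open>i = 4\<close> D_entries)
    next
      case False
      then show ?thesis using j \<open>i = 4\<close> by auto
    qed
  qed
qed



lemma meas_entry[measurable]: "(\<lambda>x::shearlet. fst x $ i $ j) \<in> borel_measurable borel"
  by (intro borel_measurable_continuous_onI continuous_intros)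

lemma meas_tentry[measurable]: "(\<lambda>x::shearlet. snd x $ i) \<in> borel_measurable borel"
  by (intro borel_measurable_continuous_onI continuous_intros)

lemma Phi_alt: "Phi a m d t1 t2 = (if 0 \<le> m \<and> m \<le> a \<and> 0 \<le> t2 \<and> t2 \<le> d then
      a powr (1/4) * ((if 1 - a < t1 \<and> t1 \<le> 1 then 1 else 0) - (if -a < t1 \<and> t1 \<le> 0 then 1 else 0)) else 0)"
  by (simp add: Phi_def indicator_def)

lemma FF_meas[measurable]: "FF \<in> borel_measurable borel"
  unfolding FF_def Phi_alt by measurable

lemma sh_param_eq: "sh_param p = (fst p *\<^sub>R vector [vector [1,0], vector [0,0]]
   + (fst (snd p) * sqrt (fst p)) *\<^sub>R vector [vector [0,1], vector [0,0]]
   + sqrt (fst p) *\<^sub>R vector [vector [0,0], vector [0,1]], snd (snd p))"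
  by (cases p) (simp add: sh_param_def mat_eq_iff2 SA_entries)

lemma sh_param_meas[measurable]: "sh_param \<in> borel_measurable borel"
  unfolding sh_param_eq[abs_def]
  by (intro borel_measurable_continuous_onI continuous_intros)



lemma h_int: "((\<lambda>a::real. (if a \<in> {0..1} then 2 * a powr (-1/2) else 0) + (if a \<in> {1..} then 2 * a powr (-3/2) else 0))
   has_integral (4 + 4)) UNIV"
proof (rule has_integral_add)
  have "((\<lambda>x::real. x powr (-1/2)) has_integral (1 powr (-1/2+1) / (-1/2+1))) {0..1}"
    by (rule has_integral_powr_from_0) auto
  then have "((\<lambda>x::real. x powr (-1/2)) has_integral 2) {0..1}" by simp
  from has_integral_mult_right[OF this, of 2]
  have "((\<lambda>x::real. 2 * x powr (-1/2)) has_integral 4) {0..1}" by simp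
  then show "((\<lambda>a::real. if a \<in> {0..1} then 2 * a powr (-1/2) else 0) has_integral 4) UNIV"
    by (subst has_integral_restrict_UNIV)
next
  have "((\<lambda>x::real. x powr (-3/2)) has_integral (-(1 powr (-3/2+1)) / (-3/2+1))) {1..}"
    by (rule has_integral_powr_to_inf) auto
  then have "((\<lambda>x::real. x powr (-3/2)) has_integral 2) {1..}" by simp
  from has_integral_mult_right[OF this, of 2]
  have "((\<lambda>x::real. 2 * x powr (-3/2)) has_integral 4) {1..}" by simp
  then show "((\<lambda>a::real. if a \<in> {1..} then 2 * a powr (-3/2) else 0) has_integral 4) UNIV"
    by (subst has_integral_restrict_UNIV)
qed

lemma h_nn: "(\<integral>\<^sup>+a. ennreal ((if a \<in> {0..1} then 2 * a powr (-1/2) else 0) + (if a \<in> {1..} then 2 * a powr (-3/2) else 0)) \<partial>lborel) = ennreal 8"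
proof (rule nn_integral_has_integral_lborel)
  show "((\<lambda>a::real. (if a \<in> {0..1} then 2 * a powr (-1/2) else 0) + (if a \<in> {1..} then 2 * a powr (-3/2) else 0))
   has_integral 8) UNIV" using h_int by simp
qed auto



lemma cbox2_emeasure:
  fixes l u :: "real^2"
  assumes "l$1 \<le> u$1" "l$2 \<le> u$2"
  shows "emeasure lborel (cbox l u) = ennreal ((u$1 - l$1) * (u$2 - l$2))"
proof -
  have ne: "cbox l u \<noteq> {}" using assms by (auto simp: mem_box_cart forall_2 intro!: exI[of _ l])
  have fin: "emeasure lborel (cbox l u) \<noteq> top" using emeasure_lborel_cbox_finite[of l u] by simp
  have "emeasure lborel (cbox l u) = ennreal (measure lborel (cbox l u))"
    by (rule emeasure_eq_ennreal_measure[OF fin])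
  also have "measure lborel (cbox l u) = (u$1 - l$1) * (u$2 - l$2)"
    using content_cbox_cart[OF ne] by (simp add: UNIV_2)
  finally show ?thesis .
qed

definition Gr :: "real \<Rightarrow> real \<Rightarrow> real^2 \<Rightarrow> real" where
  "Gr a s t = (if 0 < a \<and> 0 \<le> s \<and> s \<le> sqrt a \<and> 0 \<le> t$2 \<and> t$2 \<le> sqrt a then
     a powr (-5/2) * ((if 1 - min a 1 \<le> t$1 \<and> t$1 \<le> 1 then 1 else 0) +
                      (if -a \<le> t$1 \<and> t$1 \<le> -a + min a 1 then 1 else 0)) else 0)"

lemma level_t:
  "(\<integral>\<^sup>+t. ennreal (Gr a s t) \<partial>lborel) =
     ennreal (if 0 < a \<and> 0 \<le> s \<and> s \<le> sqrt a then a powr (-5/2) * (2 * (min a 1 * sqrt a)) else 0)"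
proof (cases "0 < a \<and> 0 \<le> s \<and> s \<le> sqrt a")
  case True
  define C1 :: "(real^2) set" where "C1 = cbox (vector [1 - min a 1, 0]) (vector [1, sqrt a])"
  define C2 :: "(real^2) set" where "C2 = cbox (vector [-a, 0]) (vector [-a + min a 1, sqrt a])"
  have eq0: "Gr a s t = a powr (-5/2) * (indicator C1 t + indicator C2 t)" for t
    using True unfolding Gr_def C1_def C2_def mem_box_cart forall_2 indicator_def by simp
  have eq: "ennreal (Gr a s t) = ennreal (a powr (-5/2)) * (indicator C1 t + indicator C2 t)" for t
    unfolding eq0 by (simp add: ennreal_mult ennreal_indicator[symmetric] ennreal_plus[symmetric] del: ennreal_plus)
  have e1: "emeasure lborel C1 = ennreal (min a 1 * sqrt a)"
    unfolding C1_def using True by (subst cbox2_emeasure) auto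
  have e2: "emeasure lborel C2 = ennreal (min a 1 * sqrt a)"
    unfolding C2_def using True by (subst cbox2_emeasure) auto
  have "(\<integral>\<^sup>+t. ennreal (Gr a s t) \<partial>lborel) = ennreal (a powr (-5/2)) * (emeasure lborel C1 + emeasure lborel C2)"
    unfolding eq C1_def C2_def
    by (subst nn_integral_cmult) (auto simp: nn_integral_add)
  also have "\<dots> = ennreal (a powr (-5/2) * (2 * (min a 1 * sqrt a)))"
    using True by (simp add: e1 e2 ennreal_plus[symmetric] ennreal_mult'[symmetric] del: ennreal_plus)
  finally show ?thesis using True by simp
next
  case False
  then have z: "\<And>t. Gr a s t = 0" by (auto simp: Gr_def)
  show ?thesis unfolding if_not_P[OF False] z by simp
qed



lemma level_s:
  assumes K: "0 < a \<Longrightarrow> K \<ge> 0"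
  shows "(\<integral>\<^sup>+s. ennreal (if 0 < a \<and> 0 \<le> s \<and> s \<le> sqrt a then K else 0) \<partial>lborel) = ennreal (if 0 < a then K * sqrt a else 0)"
proof (cases "0 < a")
  case True
  have eq: "ennreal (if 0 < a \<and> 0 \<le> s \<and> s \<le> sqrt a then K else 0) = ennreal K * indicator {0..sqrt a} s" for s
    using True by (auto simp: indicator_def)
  show ?thesis unfolding eq using True K
    by (simp add: nn_integral_cmult_indicator ennreal_mult')
next
  case False
  then show ?thesis by simp
qed

lemma nn_split:
  fixes f :: "'a::euclidean_space \<times> 'b::euclidean_space \<Rightarrow> ennreal"
  assumes "f \<in> borel_measurable borel"
  shows "integral\<^sup>N lborel f = (\<integral>\<^sup>+x. \<integral>\<^sup>+y. f (x,y) \<partial>lborel \<partial>lborel)"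
proof -
  have "f \<in> borel_measurable (lborel \<Otimes>\<^sub>M lborel)" using assms by (simp add: lborel_prod)
  from lborel.nn_integral_fst[OF this] show ?thesis by (simp add: lborel_prod)
qed

lemma m_fst[measurable]: "(\<lambda>p::real \<times> real \<times> (real^2). fst p) \<in> borel_measurable borel"
  by (intro borel_measurable_continuous_onI continuous_intros)
lemma m_fsnd[measurable]: "(\<lambda>p::real \<times> real \<times> (real^2). fst (snd p)) \<in> borel_measurable borel"
  by (intro borel_measurable_continuous_onI continuous_intros)
lemma m_ssnd[measurable]: "(\<lambda>p::real \<times> real \<times> (real^2). snd (snd p) $ i) \<in> borel_measurable borel"
  by (intro borel_measurable_continuous_onI continuous_intros)
lemma m_fst2[measurable]: "(\<lambda>p::real \<times> (real^2). fst p) \<in> borel_measurable borel"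
  by (intro borel_measurable_continuous_onI continuous_intros)
lemma m_snd2[measurable]: "(\<lambda>p::real \<times> (real^2). snd p $ i) \<in> borel_measurable borel"
  by (intro borel_measurable_continuous_onI continuous_intros)

lemma Gr_meas3: "(\<lambda>p::real \<times> real \<times> (real^2). ennreal (Gr (fst p) (fst (snd p)) (snd (snd p)))) \<in> borel_measurable borel"
  unfolding Gr_def by measurable

lemma Gr_meas2: "(\<lambda>q::real \<times> (real^2). ennreal (Gr a (fst q) (snd q))) \<in> borel_measurable borel"
  unfolding Gr_def by measurable

lemma powr_aux: "0 < (a::real) \<Longrightarrow> a powr (-5/2) * (2 * (min a 1 * sqrt a)) * sqrt a = 2 * min a 1 * a powr (-3/2)"
proof -
  assume a: "0 < a"
  have e: "a powr (-5/2) * a powr 1 = a powr (-5/2 + 1)" by (simp only: powr_add)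
  have s: "sqrt a * sqrt a = a" using a by simp
  have p: "a powr (-5/2) * a = a powr (-3/2)" using e a by simp
  have "a powr (-5/2) * (2 * (min a 1 * sqrt a)) * sqrt a = 2 * min a 1 * (a powr (-5/2) * (sqrt a * sqrt a))"
    by (simp only: mult_ac)
  also have "\<dots> = 2 * min a 1 * a powr (-3/2)" by (simp only: s p)
  finally show ?thesis .
qed

lemma final_bound: "ennreal (if 0 < a then a powr (-5/2) * (2 * (min a 1 * sqrt a)) * sqrt a else 0)
   \<le> ennreal ((if a \<in> {0..1} then 2 * a powr (-1/2) else 0) + (if a \<in> {1..} then 2 * a powr (-3/2) else 0))"
proof (cases "0 < a")
  case True
  show ?thesis unfolding if_P[OF True] powr_aux[OF True]
  proof (cases "a \<le> 1")
    case le: True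
    have e: "a powr 1 * a powr (-3/2) = a powr (1 + -3/2)" by (simp only: powr_add)
    have "a * a powr (-3/2) = a powr (-1/2)" using True e by simp
    then show "ennreal (2 * min a 1 * a powr (- 3 / 2)) \<le> ennreal ((if a \<in> {0..1} then 2 * a powr (- 1 / 2) else 0) + (if a \<in> {1..} then 2 * a powr (- 3 / 2) else 0))"
      using True le by (intro ennreal_leI) (simp add: min_def)
  next
    case gt: False
    then show "ennreal (2 * min a 1 * a powr (- 3 / 2)) \<le> ennreal ((if a \<in> {0..1} then 2 * a powr (- 1 / 2) else 0) + (if a \<in> {1..} then 2 * a powr (- 3 / 2) else 0))"
      using True by (intro ennreal_leI) (simp add: min_def)
  qed
qed simp

lemma Gr_finite: "(\<integral>\<^sup>+p. ennreal (Gr (fst p) (fst (snd p)) (snd (snd p))) \<partial>lborel) < \<infinity>"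
proof -
  have "(\<integral>\<^sup>+p. ennreal (Gr (fst p) (fst (snd p)) (snd (snd p))) \<partial>lborel)
      = (\<integral>\<^sup>+a. \<integral>\<^sup>+q. ennreal (Gr a (fst q) (snd q)) \<partial>lborel \<partial>lborel)"
    using nn_split[OF Gr_meas3] by simp
  also have "\<dots> = (\<integral>\<^sup>+a. \<integral>\<^sup>+s. \<integral>\<^sup>+t. ennreal (Gr a s t) \<partial>lborel \<partial>lborel \<partial>lborel)"
    using nn_split[OF Gr_meas2] by simp
  also have "\<dots> = (\<integral>\<^sup>+a. ennreal (if 0 < a then a powr (-5/2) * (2 * (min a 1 * sqrt a)) * sqrt a else 0) \<partial>lborel)"
    by (simp add: level_t) (intro nn_integral_cong level_s, simp)
  also have "\<dots> \<le> (\<integral>\<^sup>+a. ennreal ((if a \<in> {0..1} then 2 * a powr (-1/2) else 0) + (if a \<in> {1..} then 2 * a powr (-3/2) else 0)) \<partial>lborel)"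
    by (intro nn_integral_mono final_bound)
  also have "\<dots> = ennreal 8" by (rule h_nn)
  finally show ?thesis by (simp add: le_less_trans)
qed



lemma Pr_bound: "0 < (a::real) \<Longrightarrow>
  ((if 1 - a < t \<and> t \<le> 1 then 1 else 0) - (if -a < t \<and> t \<le> 0 then 1 else 0) :: real)^2
   \<le> (if 1 - min a 1 \<le> t \<and> t \<le> 1 then 1 else 0) + (if -a \<le> t \<and> t \<le> -a + min a 1 then 1 else 0)"
  by (auto simp: min_def)

lemma powr_facts:
  assumes a: "0 < (a::real)"
  shows "1 / a^3 * (a powr (1/4))^2 = a powr (-5/2)"
proof -
  have e1: "(a powr (1/4))^2 = a powr (1/2)"
    using a by (simp add: powr_realpow[symmetric] powr_powr)
  have e2: "1 / a^3 = a powr (-3)"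
    using a by (simp add: powr_minus powr_realpow divide_inverse)
  have e3: "a powr (-3) * a powr (1/2) = a powr (-3 + 1/2)" by (simp only: powr_add)
  show ?thesis using e1 e2 e3 by simp
qed

lemma pw_real:
  assumes a: "0 < a"
  shows "1 / a^3 * (Phi a (s * sqrt a) (sqrt a) (t$1) (t$2))^2 \<le> Gr a s t"
proof (cases "0 \<le> s * sqrt a \<and> s * sqrt a \<le> a \<and> 0 \<le> t$2 \<and> t$2 \<le> sqrt a")
  case True
  have sq: "sqrt a > 0" using a by simp
  have e: "sqrt a * sqrt a = a" using a by simp
  have "s * sqrt a \<le> sqrt a * sqrt a" using True e by linarith
  then have s1: "s \<le> sqrt a" by (rule mult_right_le_imp_le[OF _ sq])
  have s0: "0 \<le> s" using True sq by (simp add: zero_le_mult_iff)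
  define P where "P = ((if 1 - a < t$1 \<and> t$1 \<le> 1 then 1 else 0) - (if -a < t$1 \<and> t$1 \<le> 0 then 1 else 0) :: real)"
  have "1 / a^3 * (Phi a (s * sqrt a) (sqrt a) (t$1) (t$2))^2 = (1 / a^3 * (a powr (1/4))^2) * P^2"
    using True unfolding Phi_alt P_def by (simp add: power_mult_distrib)
  also have "\<dots> = a powr (-5/2) * P^2" using powr_facts[OF a] by simp
  also have "\<dots> \<le> Gr a s t"
    unfolding Gr_def using True a s0 s1 Pr_bound[OF a, of "t$1"] unfolding P_def
    by (simp add: mult_left_mono)
  finally show ?thesis .
next
  case False
  then have "Phi a (s * sqrt a) (sqrt a) (t$1) (t$2) = 0" unfolding Phi_def by (rule if_not_P)
  moreover have "Gr a s t \<ge> 0" by (simp add: Gr_def)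
  ultimately show ?thesis by simp
qed

lemma FF_param: "FF (sh_param (a, s, t)) = complex_of_real (Phi a (s * sqrt a) (sqrt a) (t$1) (t$2))"
  by (simp add: FF_def sh_param_def SA_entries)

lemma pw:
  "(case p of (a, s, t) \<Rightarrow> indicator {0<..} a * ennreal (1 / a ^ 3)) * ennreal (norm ((norm (FF (sh_param p)))\<^sup>2))
    \<le> ennreal (Gr (fst p) (fst (snd p)) (snd (snd p)))"
proof -
  obtain a s t where p: "p = (a, s, t)" by (cases p) auto
  show ?thesis
  proof (cases "0 < a")
    case True
    have "(case p of (a, s, t) \<Rightarrow> indicator {0<..} a * ennreal (1 / a ^ 3)) * ennreal (norm ((norm (FF (sh_param p)))\<^sup>2))
       = ennreal (1 / a^3) * ennreal ((Phi a (s * sqrt a) (sqrt a) (t$1) (t$2))^2)"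
      using True by (simp add: p FF_param)
    also have "\<dots> = ennreal (1 / a^3 * (Phi a (s * sqrt a) (sqrt a) (t$1) (t$2))^2)"
      using True by (intro ennreal_mult[symmetric]) auto
    also have "\<dots> \<le> ennreal (Gr a s t)" by (intro ennreal_leI pw_real True)
    finally show ?thesis by (simp add: p)
  next
    case False
    then show ?thesis by (simp add: p)
  qed
qed



lemma sets_haar: "sets shearlet_haar = sets borel"
  by (simp add: shearlet_haar_def)

lemma W_meas: "(\<lambda>(a::real, s::real, t::real^2). indicator {0<..} a * ennreal (1 / a ^ 3)) \<in> borel_measurable lborel"
proof -
  have "(\<lambda>p::real \<times> real \<times> (real^2). indicator {0<..} (fst p) * ennreal (1 / (fst p) ^ 3)) \<in> borel_measurable borel"
    by measurable
  then show ?thesis by (simp add: case_prod_beta')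
qed

lemma sh_param_meas': "sh_param \<in> measurable (density lborel (\<lambda>(a::real, s::real, t::real^2). indicator {0<..} a * ennreal (1 / a ^ 3))) borel"
  using sh_param_meas by (simp add: measurable_cong_sets[OF sets_density refl])

lemma FF_meas_haar: "FF \<in> borel_measurable shearlet_haar"
  using FF_meas by (simp add: measurable_cong_sets[OF sets_haar refl])

lemma L2: "in_L2_shearlet FF"
  unfolding in_L2_shearlet_def
proof (intro conjI FF_meas_haar integrableI_bounded)
  show "(\<lambda>x. (cmod (FF x))\<^sup>2) \<in> borel_measurable shearlet_haar"
    using FF_meas_haar by measurable
  have "(\<integral>\<^sup>+x. ennreal (norm ((cmod (FF x))\<^sup>2)) \<partial>shearlet_haar)
     = (\<integral>\<^sup>+p. (\<lambda>(a::real, s::real, t::real^2). indicator {0<..} a * ennreal (1 / a ^ 3)) p * ennreal (norm ((cmod (FF (sh_param p)))\<^sup>2)) \<partial>lborel)"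
    unfolding shearlet_haar_def
    by (subst nn_integral_distr[OF sh_param_meas']) (auto intro!: nn_integral_density W_meas)
  also have "\<dots> \<le> (\<integral>\<^sup>+p. ennreal (Gr (fst p) (fst (snd p)) (snd (snd p))) \<partial>lborel)"
    by (intro nn_integral_mono pw)
  also have "\<dots> < \<infinity>" by (rule Gr_finite)
  finally show "(\<integral>\<^sup>+x. ennreal (norm ((cmod (FF x))\<^sup>2)) \<partial>shearlet_haar) < \<infinity>" .
qed



definition BB :: "(real \<times> real \<times> (real^2)) set" where
  "BB = {3/5..9/10} \<times> ({1/10..2/5} \<times> cbox (vector [3/5, 1/10]) (vector [9/10, 2/5]))"

lemma BB_sets: "BB \<in> sets lborel"
  unfolding BB_def by (simp add: lborel_prod[symmetric])

lemma BB_pos: "emeasure lborel BB \<noteq> 0"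
proof -
  have ms: "({1/10..2/5::real} \<times> (cbox (vector [3/5, 1/10]) (vector [9/10, 2/5]) :: (real^2) set)) \<in> sets (borel :: (real \<times> (real^2)) measure)"
    unfolding borel_prod[symmetric] by (intro pair_measureI) auto
  have "emeasure lborel BB = emeasure (lborel \<Otimes>\<^sub>M lborel) BB"
    by (simp only: lborel_prod)
  also have "\<dots> = emeasure (lborel \<Otimes>\<^sub>M lborel) ({3/5..9/10::real} \<times> ({1/10..2/5::real} \<times> (cbox (vector [3/5, 1/10]) (vector [9/10, 2/5]) :: (real^2) set)))"
    unfolding BB_def ..
  also have "\<dots> = emeasure lborel {3/5..9/10::real} * emeasure (lborel \<Otimes>\<^sub>M lborel) ({1/10..2/5::real} \<times> (cbox (vector [3/5, 1/10]) (vector [9/10, 2/5]) :: (real^2) set))"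
    by (subst lborel.emeasure_pair_measure_Times) (auto intro!: pair_measureI simp: ms lborel_prod)
  also have "emeasure (lborel \<Otimes>\<^sub>M lborel) ({1/10..2/5::real} \<times> (cbox (vector [3/5, 1/10]) (vector [9/10, 2/5]) :: (real^2) set))
      = emeasure lborel {1/10..2/5::real} * emeasure lborel ((cbox (vector [3/5, 1/10]) (vector [9/10, 2/5]) :: (real^2) set))"
    by (subst lborel.emeasure_pair_measure_Times) auto
  finally show ?thesis by (simp add: cbox2_emeasure ennreal_mult'[symmetric])
qed

lemma BB_nz:
  assumes "p \<in> BB"
  shows "0 < (\<lambda>(a::real, s::real, t::real^2). indicator {0<..} a * ennreal (1 / a ^ 3)) p \<and> FF (sh_param p) \<noteq> 0"
proof -
  obtain a s t where p: "p = (a, s, t)" by (cases p) auto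
  have a: "3/5 \<le> a" "a \<le> 9/10" and s: "1/10 \<le> s" "s \<le> 2/5"
    and t: "3/5 \<le> t$1" "t$1 \<le> 9/10" "1/10 \<le> t$2" "t$2 \<le> 2/5"
    using assms by (auto simp: p BB_def mem_box_cart forall_2)
  have sq1: "sqrt a \<le> 1" using a by simp
  have sq2: "2/5 \<le> sqrt a" using a by (intro real_le_rsqrt) (simp add: power2_eq_square)
  have sq0: "0 \<le> sqrt a" using a by simp
  have "s * sqrt a \<le> 2/5 * 1" using s sq1 sq0 by (intro mult_mono) auto
  then have c: "0 \<le> s * sqrt a \<and> s * sqrt a \<le> a \<and> 0 \<le> t$2 \<and> t$2 \<le> sqrt a"
    using a s t sq0 sq2 by auto
  have "Phi a (s * sqrt a) (sqrt a) (t$1) (t$2) = a powr (1/4)"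
    using c a t unfolding Phi_def by (simp add: indicator_def)
  moreover have "a powr (1/4) > 0" using a by simp
  ultimately have "FF (sh_param p) \<noteq> 0" by (simp add: p FF_param)
  moreover have "0 < (\<lambda>(a::real, s::real, t::real^2). indicator {0<..} a * ennreal (1 / a ^ 3)) p"
    using a by (simp add: p)
  ultimately show ?thesis by simp
qed

lemma nonzero: "\<not> (AE x in shearlet_haar. FF x = 0)"
proof
  assume "AE x in shearlet_haar. FF x = 0"
  then have "AE p in density lborel (\<lambda>(a::real, s::real, t::real^2). indicator {0<..} a * ennreal (1 / a ^ 3)). FF (sh_param p) = 0"
    unfolding shearlet_haar_def
    by (subst (asm) AE_distr_iff[OF sh_param_meas']) (use FF_meas in auto)
  then have "AE p in lborel. 0 < (\<lambda>(a::real, s::real, t::real^2). indicator {0<..} a * ennreal (1 / a ^ 3)) p \<longrightarrow> FF (sh_param p) = 0"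
    by (subst (asm) AE_density[OF W_meas])
  then have "AE p in lborel. p \<notin> BB"
    by eventually_elim (use BB_nz in blast)
  then have "BB \<in> null_sets lborel" using AE_iff_null_sets[OF BB_sets] by simp
  then show False using BB_pos by auto
qed


theorem proposition7p1:
  shows "\<exists>F. in_L2_shearlet F \<and> \<not> (AE x in shearlet_haar. F x = 0) \<and>
    (\<exists>(m::nat) (g::nat \<Rightarrow> shearlet) (c::nat \<Rightarrow> complex).
       m \<ge> 1 \<and> (\<forall>k<m. g k \<in> shearlet_group) \<and> inj_on g {..<m} \<and>
       (\<forall>k<m. c k \<noteq> 0) \<and>
       (AE x in shearlet_haar. (\<Sum>k<m. c k * left_transl (g k) F x) = 0))"
proof (intro exI conjI)
  show "in_L2_shearlet FF" by (rule L2)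
  show "\<not> (AE x in shearlet_haar. FF x = 0)" by (rule nonzero)
  show "(5::nat) \<ge> 1" by simp
  show "\<forall>k<5. gg k \<in> shearlet_group" by (simp add: gg_in)
  show "inj_on gg {..<5}" by (rule gg_inj)
  show "\<forall>k<5. cc k \<noteq> 0" by (simp add: cc_def)
  show "AE x in shearlet_haar. (\<Sum>k<5. cc k * left_transl (gg k) FF x) = 0"
    by (intro AE_I2) (rule dependence)
qed

end
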